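(* Let $n\geq 2$, $k\geq 0$ an integer, $1\leq i_1,\dots,i_{2k+1}\leq n$, and for $1\leq r\leq n$ let $d_r$ be the number of times $r$ appears in the sequence $(i_1,\dots,i_{2k+1})$, so $\sum_{r=1}^n d_r=2k+1$. If more than one of the integers $d_1,\dots,d_n$ is odd, then for each $1\leq i\leq n$, $$\mathbf{E}\left[\frac{1}{V_n}W(\varphi_i)\,H_{d_1}(W(\varphi_1))H_{d_2}(W(\varphi_2))\cdots H_{d_n}(W(\varphi_n))\right]=0.$$
   Context: $(W_t)_{t\geq0}$ is a standard Brownian motion, $\varphi_i=1_{[i-1,i]}$, $W(\varphi_i)=W_i-W_{i-1}$ (i.i.d. standard Gaussians), $V_n=\big(\sum_{i=1}^n W(\varphi_i)^2\big)^{1/2}$. $H_d(x)=(-1)^d e^{x^2/2}\frac{d^d}{dx^d}e^{-x^2/2}$ is the $d$-th Hermite polynomial. *)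

theory Defs
  imports "HOL-Probability.Probability"
begin

definition hermite :: "nat \<Rightarrow> real \<Rightarrow> real" where
  "hermite d x = (-1) ^ d * exp (x\<^sup>2 / 2) * ((deriv ^^ d) (\<lambda>y. exp (- y\<^sup>2 / 2)) x)"

end

theory Submission
  imports Defs "HOL-Computational_Algebra.Polynomial"
begin

fun HP :: "nat \<Rightarrow> real poly" where
  "HP 0 = 1"
| "HP (Suc d) = pderiv (HP d) - [:0,1:] * HP d"

lemma deriv_gauss_poly:
  "((\<lambda>y. poly p y * exp (- y\<^sup>2 / 2)) has_real_derivative
     poly (pderiv p - [:0,1:] * p) x * exp (- x\<^sup>2 / 2)) (at x)"
proof -
  have "((\<lambda>y. poly p y * exp (- y\<^sup>2 / 2)) has_real_derivative
     poly (pderiv p) x * exp (- x\<^sup>2 / 2) + poly p x * (exp (- x\<^sup>2 / 2) * (- (2 * x) / 2))) (at x)"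
    by (auto intro!: derivative_eq_intros poly_DERIV)
  then show ?thesis by (simp add: algebra_simps)
qed

lemma herm_repr: "(deriv ^^ d) (\<lambda>y::real. exp (- y\<^sup>2 / 2)) = (\<lambda>y. poly (HP d) y * exp (- y\<^sup>2 / 2))"
proof (induction d)
  case 0 then show ?case by simp
next
  case (Suc d)
  show ?case
    unfolding funpow.simps comp_def Suc HP.simps
    by (rule ext, rule DERIV_imp_deriv, rule deriv_gauss_poly)
qed

lemma herm_deriv: "((deriv ^^ d) (\<lambda>y::real. exp (- y\<^sup>2 / 2)) has_real_derivative
    (deriv ^^ Suc d) (\<lambda>y::real. exp (- y\<^sup>2 / 2)) x) (at x)"
  unfolding herm_repr HP.simps by (rule deriv_gauss_poly)

lemma herm_parity: "(deriv ^^ d) (\<lambda>y::real. exp (- y\<^sup>2 / 2)) (- x) = (-1)^d * (deriv ^^ d) (\<lambda>y::real. exp (- y\<^sup>2 / 2)) x"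
proof (induction d arbitrary: x)
  case 0 then show ?case by simp
next
  case (Suc d)
  let ?f = "(deriv ^^ d) (\<lambda>y::real. exp (- y\<^sup>2 / 2))"
  let ?g = "(deriv ^^ Suc d) (\<lambda>y::real. exp (- y\<^sup>2 / 2))"
  have e: "(\<lambda>y. ?f (- y)) = (\<lambda>y. (-1)^d * ?f y)" using Suc by auto
  have d1: "((\<lambda>y. ?f (- y)) has_real_derivative ?g (- x) * (- 1)) (at x)"
    by (rule DERIV_chain2[OF herm_deriv]) (auto intro!: derivative_eq_intros)
  have d2: "((\<lambda>y. (-1)^d * ?f y) has_real_derivative (-1)^d * ?g x) (at x)"
    by (rule DERIV_cmult[OF herm_deriv])
  from d1 d2 e have "?g (- x) * (- 1) = (-1)^d * ?g x" using DERIV_unique by metis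
  then show ?case by simp
qed

lemma hermite_poly: "hermite d x = (-1)^d * poly (HP d) x"
  unfolding hermite_def herm_repr
  by (simp add: mult_exp_exp)

lemma hermite_odd: "hermite d (- x) = (-1)^d * hermite d x"
  unfolding hermite_def using herm_parity[of d x] by simp

lemma hermite_measurable[measurable]: "hermite d \<in> borel_measurable borel"
proof -
  have "hermite d = (\<lambda>x. (-1)^d * poly (HP d) x)" by (rule ext, rule hermite_poly)
  moreover have "continuous_on UNIV (\<lambda>x. (-1)^d * poly (HP d) x :: real)"
    by (intro continuous_intros)
  ultimately show ?thesis by (simp add: borel_measurable_continuous_onI)
qed

lemma integrable_normal_poly: "integrable lborel (\<lambda>x. std_normal_density x * poly p x)"
proof -
  have "(\<lambda>x. std_normal_density x * poly p x) = (\<lambda>x. \<Sum>j\<le>degree p. coeff p j * (std_normal_density x * x ^ j))"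
    by (rule ext) (simp add: poly_altdef sum_distrib_left algebra_simps)
  moreover have "integrable lborel (\<lambda>x. \<Sum>j\<le>degree p. coeff p j * (std_normal_density x * x ^ j))"
    by (rule Bochner_Integration.integrable_sum, rule Bochner_Integration.integrable_mult_right, rule integrable_std_normal_moment)
  ultimately show ?thesis by simp
qed

lemma integrable_normal_hermite: "integrable lborel (\<lambda>x. std_normal_density x * hermite d x)"
  unfolding hermite_poly
  using integrable_mult_right[OF integrable_normal_poly[of "HP d"], of "(-1)^d"]
  by (simp add: algebra_simps)

theorem lemma3p4:
  fixes M :: "'a measure" and G :: "nat \<Rightarrow> 'a \<Rightarrow> real"
    and n k :: nat and idx :: "nat \<Rightarrow> nat" and i :: nat
  assumes "prob_space M"
    and "prob_space.indep_vars M (\<lambda>_. borel) G {1..n}"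
    and "\<And>r. r \<in> {1..n} \<Longrightarrow> distributed M lborel (G r) (\<lambda>x. ennreal (std_normal_density x))"
    and "n \<ge> 2"
    and "\<And>j. j \<in> {1..2*k+1} \<Longrightarrow> idx j \<in> {1..n}"
    and "card {r \<in> {1..n}. odd (card {j \<in> {1..2*k+1}. idx j = r})} > 1"
    and "i \<in> {1..n}"
  shows "integrable M (\<lambda>\<omega>. G i \<omega> / sqrt (\<Sum>r\<in>{1..n}. (G r \<omega>)\<^sup>2)
            * (\<Prod>r\<in>{1..n}. hermite (card {j \<in> {1..2*k+1}. idx j = r}) (G r \<omega>)))
    \<and> prob_space.expectation M (\<lambda>\<omega>. G i \<omega> / sqrt (\<Sum>r\<in>{1..n}. (G r \<omega>)\<^sup>2)
            * (\<Prod>r\<in>{1..n}. hermite (card {j \<in> {1..2*k+1}. idx j = r}) (G r \<omega>))) = 0"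
proof -
  interpret prob_space M by fact
  define I where "I = {1..n::nat}"
  define d where "d r = card {j \<in> {1..2*k+1}. idx j = r}" for r
  have fI: "finite I" and Ine: "I \<noteq> {}" and iI: "i \<in> I" using assms(4,7) by (auto simp: I_def)
  obtain r0 where r0I: "r0 \<in> I" and r0i: "r0 \<noteq> i" and r0odd: "odd (d r0)"
  proof -
    let ?S = "{r \<in> {1..n}. odd (card {j \<in> {1..2*k+1}. idx j = r})}"
    have "\<not> ?S \<subseteq> {i}"
    proof
      assume "?S \<subseteq> {i}"
      then have "card ?S \<le> card {i}" by (intro card_mono) auto
      with assms(6) show False by simp
    qed
    then obtain r where "r \<in> ?S" "r \<noteq> i" by blast
    then show ?thesis using that by (auto simp: I_def d_def)
  qed
  have distG: "distributed M lborel (G r) (\<lambda>x. ennreal (std_normal_density x))" if "r \<in> I" for r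
    using assms(3) that by (simp add: I_def)
  have rvG: "random_variable borel (G r)" if "r \<in> I" for r
    using distributed_measurable[OF distG[OF that]] by simp
  define H where "H r = (if r \<in> I then G r else (\<lambda>_. 0))" for r
  have rvH[measurable]: "random_variable borel (H r)" for r
    using rvG by (cases "r \<in> I") (auto simp: H_def)
  have indepG: "indep_vars (\<lambda>_. borel) G I" using assms(2) by (simp add: I_def)
  have indepH: "indep_vars (\<lambda>_. borel) H I"
    by (rule indep_vars_cong[THEN iffD1, OF _ _ _ indepG]) (auto simp: H_def)
  define Phi where "Phi x = x i / sqrt (\<Sum>r\<in>I. (x r)\<^sup>2) * (\<Prod>r\<in>I. hermite (d r) (x r))" for x :: "nat \<Rightarrow> real"
  have Phi_meas[measurable]: "Phi \<in> borel_measurable (Pi\<^sub>M I (\<lambda>_. borel))"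
    unfolding Phi_def using iI by measurable
  define X where "X \<omega> = (\<lambda>r\<in>I. H r \<omega>)" for \<omega>
  have X_meas[measurable]: "X \<in> measurable M (Pi\<^sub>M I (\<lambda>_. borel))"
    unfolding X_def by (intro measurable_restrict rvH)
  have integrand: "(\<lambda>\<omega>. G i \<omega> / sqrt (\<Sum>r\<in>{1..n}. (G r \<omega>)\<^sup>2)
            * (\<Prod>r\<in>{1..n}. hermite (card {j \<in> {1..2*k+1}. idx j = r}) (G r \<omega>))) = (\<lambda>\<omega>. Phi (X \<omega>))"
    using iI by (auto simp: Phi_def X_def H_def I_def d_def intro!: ext sum.cong prod.cong)
  have intP: "integrable M (\<lambda>\<omega>. \<Prod>r\<in>I. hermite (d r) (G r \<omega>))"
  proof (rule indep_vars_integrable[OF fI])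
    show "indep_vars (\<lambda>_. borel) (\<lambda>r \<omega>. hermite (d r) (G r \<omega>)) I"
      by (rule indep_vars_compose2[OF indepG]) auto
    fix r assume r: "r \<in> I"
    show "integrable M (\<lambda>\<omega>. hermite (d r) (G r \<omega>))"
      using distributed_integrable[OF distG[OF r], of "hermite (d r)"] integrable_normal_hermite[of "d r"]
      by simp
  qed
  have intPhi: "integrable M (\<lambda>\<omega>. Phi (X \<omega>))"
  proof (rule Bochner_Integration.integrable_bound[OF intP])
    show "(\<lambda>\<omega>. Phi (X \<omega>)) \<in> borel_measurable M" by measurable
    show "AE \<omega> in M. norm (Phi (X \<omega>)) \<le> norm (\<Prod>r\<in>I. hermite (d r) (G r \<omega>))"
    proof (rule AE_I2)
      fix \<omega>
      let ?a = "G i \<omega>" and ?S = "\<Sum>r\<in>I. (G r \<omega>)\<^sup>2"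
      have "?a\<^sup>2 \<le> ?S" using iI fI by (intro member_le_sum) auto
      then have "sqrt (?a\<^sup>2) \<le> sqrt ?S" by (rule real_sqrt_le_mono)
      then have le: "\<bar>?a\<bar> \<le> sqrt ?S" by simp
      have q: "\<bar>?a / sqrt ?S\<bar> \<le> 1"
      proof (cases "sqrt ?S = 0")
        case True then show ?thesis by simp
      next
        case False
        then have "sqrt ?S > 0" using real_sqrt_ge_zero[of ?S] sum_nonneg[of I "\<lambda>r. (G r \<omega>)\<^sup>2"] by auto
        then show ?thesis using le by (simp add: abs_div divide_le_eq_1)
      qed
      have "Phi (X \<omega>) = ?a / sqrt ?S * (\<Prod>r\<in>I. hermite (d r) (G r \<omega>))"
        using iI by (auto simp: Phi_def X_def H_def intro!: sum.cong prod.cong)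
      then have "norm (Phi (X \<omega>)) = \<bar>?a / sqrt ?S\<bar> * \<bar>\<Prod>r\<in>I. hermite (d r) (G r \<omega>)\<bar>"
        by (simp only: real_norm_def abs_mult)
      also have "\<dots> \<le> \<bar>\<Prod>r\<in>I. hermite (d r) (G r \<omega>)\<bar>"
        using q by (intro mult_left_le_one_le) auto
      finally show "norm (Phi (X \<omega>)) \<le> norm (\<Prod>r\<in>I. hermite (d r) (G r \<omega>))" by simp
    qed
  qed
  define H' where "H' r \<omega> = (if r = r0 then - H r \<omega> else H r \<omega>)" for r \<omega>
  have rvH'[measurable]: "random_variable borel (H' r)" for r
    unfolding H'_def by measurable
  have indepH': "indep_vars (\<lambda>_. borel) H' I"
  proof -
    have "indep_vars (\<lambda>_. borel) (\<lambda>r \<omega>. (\<lambda>x::real. if r = r0 then - x else x) (H r \<omega>)) I"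
      by (rule indep_vars_compose2[OF indepH]) auto
    moreover have "(\<lambda>r \<omega>. if r = r0 then - H r \<omega> else H r \<omega>) = H'"
      by (intro ext) (simp add: H'_def)
    ultimately show ?thesis by simp
  qed
  have distr_eq: "distr M borel (H' r) = distr M borel (H r)" if r: "r \<in> I" for r
  proof (cases "r = r0")
    case False
    then have "H' r = H r" by (intro ext) (simp add: H'_def)
    then show ?thesis by simp
  next
    case True
    have "distributed M lborel (\<lambda>x. 0 + (-1) * G r0 x) (normal_density (0 + (-1) * 0) (\<bar>-1\<bar> * 1))"
      by (rule normal_density_affine) (use distG[OF r0I] in auto)
    then have d1: "distributed M lborel (\<lambda>x. - G r0 x) (\<lambda>x. ennreal (std_normal_density x))" by simp
    have "distr M borel (H' r) = distr M lborel (\<lambda>x. - G r0 x)"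
      using True r0I by (intro distr_cong) (auto simp: H'_def H_def)
    also have "\<dots> = density lborel (\<lambda>x. ennreal (std_normal_density x))"
      by (rule distributed_distr_eq_density[OF d1])
    also have "\<dots> = distr M lborel (G r0)"
      by (rule distributed_distr_eq_density[OF distG[OF r0I], symmetric])
    also have "\<dots> = distr M borel (H r)"
      using True r0I by (intro distr_cong) (auto simp: H_def)
    finally show ?thesis .
  qed
  define X' where "X' \<omega> = (\<lambda>r\<in>I. H' r \<omega>)" for \<omega>
  have X'_meas[measurable]: "X' \<in> measurable M (Pi\<^sub>M I (\<lambda>_. borel))"
    unfolding X'_def by (intro measurable_restrict rvH')
  have "distr M (Pi\<^sub>M I (\<lambda>_. borel)) X' = (\<Pi>\<^sub>M r\<in>I. distr M borel (H' r))"
    unfolding X'_def by (rule indep_vars_iff_distr_eq_PiM[THEN iffD1, OF Ine rvH' indepH'])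
  also have "\<dots> = (\<Pi>\<^sub>M r\<in>I. distr M borel (H r))"
    by (rule PiM_cong) (auto simp: distr_eq)
  also have "\<dots> = distr M (Pi\<^sub>M I (\<lambda>_. borel)) X"
    unfolding X_def by (rule indep_vars_iff_distr_eq_PiM[THEN iffD1, OF Ine rvH indepH, symmetric])
  finally have DX: "distr M (Pi\<^sub>M I (\<lambda>_. borel)) X' = distr M (Pi\<^sub>M I (\<lambda>_. borel)) X" .
  have flip: "Phi (X' \<omega>) = - Phi (X \<omega>)" for \<omega>
  proof -
    have s: "(\<Sum>r\<in>I. (X' \<omega> r)\<^sup>2) = (\<Sum>r\<in>I. (X \<omega> r)\<^sup>2)"
      by (intro sum.cong) (auto simp: X'_def X_def H'_def)
    have xi: "X' \<omega> i = X \<omega> i" using iI r0i by (simp add: X'_def X_def H'_def)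
    have "(\<Prod>r\<in>I. hermite (d r) (X' \<omega> r)) = hermite (d r0) (X' \<omega> r0) * (\<Prod>r\<in>I-{r0}. hermite (d r) (X' \<omega> r))"
      using fI r0I by (rule prod.remove)
    also have "(\<Prod>r\<in>I-{r0}. hermite (d r) (X' \<omega> r)) = (\<Prod>r\<in>I-{r0}. hermite (d r) (X \<omega> r))"
      by (intro prod.cong) (auto simp: X'_def X_def H'_def)
    also have "hermite (d r0) (X' \<omega> r0) = - hermite (d r0) (X \<omega> r0)"
      using r0I r0odd by (simp add: X'_def X_def H'_def hermite_odd)
    also have "- hermite (d r0) (X \<omega> r0) * (\<Prod>r\<in>I-{r0}. hermite (d r) (X \<omega> r)) = - (\<Prod>r\<in>I. hermite (d r) (X \<omega> r))"
      using prod.remove[OF fI r0I, of "\<lambda>r. hermite (d r) (X \<omega> r)"] by simp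
    finally show ?thesis unfolding Phi_def s xi by simp
  qed
  have "expectation (\<lambda>\<omega>. Phi (X \<omega>)) = integral\<^sup>L (distr M (Pi\<^sub>M I (\<lambda>_. borel)) X) Phi"
    by (rule integral_distr[symmetric]) measurable
  also have "\<dots> = integral\<^sup>L (distr M (Pi\<^sub>M I (\<lambda>_. borel)) X') Phi" by (simp add: DX)
  also have "\<dots> = expectation (\<lambda>\<omega>. Phi (X' \<omega>))"
    by (rule integral_distr) measurable
  also have "\<dots> = - expectation (\<lambda>\<omega>. Phi (X \<omega>))" by (simp add: flip)
  finally have "expectation (\<lambda>\<omega>. Phi (X \<omega>)) = 0" by simp
  then show ?thesis using intPhi unfolding integrand by simp
qed

end
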